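(* Let $\mathcal{C}:=\operatorname{conv}(\{\Sigma_e\}_{e\in\mathcal{E}})$ and let $\mathcal{P}$ be the set of all distributions $P$ on $\mathbb{R}^{1\times p}$ with $\mathbb{E}_P[\mathbf{x}]=0$ and finite second moments such that $\mathbb{E}_P[\mathbf{x}^\top\mathbf{x}]\in\mathcal{C}$. Let $\mathcal{L}$ be one of $\mathcal{L}_{\mathrm{RCS}}$, $-\mathcal{L}_{\mathrm{var}}$, $\mathcal{L}_{\mathrm{reg}}$, and let $V_k^*\in\mathcal{O}_{p\times k}$ be a solution of the corresponding problem (maxRCS, minPCA, maxRegret respectively), i.e. $V_k^*\in\arg\min_{V\in\mathcal{O}_{p\times k}}\max_{e\in\mathcal{E}}\mathcal{L}(V;P_e)$. Then: (i) for all $V\in\mathcal{O}_{p\times k}$, $\sup_{P\in\mathcal{P}}\mathcal{L}(V;P)=\max_{e\in\mathcal{E}}\mathcal{L}(V;P_e)$; (ii) for all $V,W\in\mathcal{O}_{p\times k}$, if $\max_e\mathcal{L}(V;P_e)<\max_e\mathcal{L}(W;P_e)$ then $\sup_{P\in\mathcal{P}}\mathcal{L}(V;P)<\sup_{P\in\mathcal{P}}\mathcal{L}(W;P)$; (iii) $V_k^*\in\arg\min_{V\in\mathcal{O}_{p\times k}}\sup_{P\in\mathcal{P}}\mathcal{L}(V;P)$; (iv) the conclusion of (iii) does not hold in general for pooled PCA and separate PCA: there exist $p,k,E$, weights $(w_e)$ and source distributions such that the (unique up to sign) solution $V^{\mathrm{pool}}$ of poolPCA and the solution $V^{\mathrm{sep}}$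 of sepPCA are not in $\arg\min_{V}\sup_{P\in\mathcal{P}}\mathcal{L}(V;P)$.
   Context: Let $p\ge 1$ and $1\le k\le p$ be integers and $\mathcal{O}_{p\times k}:=\{V\in\mathbb{R}^{p\times k}: V^\top V=I_k\}$. Source domains are $\mathcal{E}=\{1,\dots,E\}$; for each $e\in\mathcal{E}$, $P_e$ is a distribution on row vectors $\mathbf{x}\in\mathbb{R}^{1\times p}$ with $\mathbb{E}[\mathbf{x}]=0$ and finite covariance $\Sigma_e:=\mathbb{E}[\mathbf{x}^\top\mathbf{x}]$ with $\operatorname{Tr}(\Sigma_e)>0$; weights $w_e>0$ with $\sum_e w_e=1$. For symmetric positive semidefinite $\Sigma$ and $V\in\mathcal{O}_{p\times k}$: $\mathcal{L}_{\mathrm{var}}(V;\Sigma)=\operatorname{Tr}(V^\top\Sigma V)$, $\mathcal{L}_{\mathrm{RCS}}(V;\Sigma)=\operatorname{Tr}(\Sigma)-\operatorname{Tr}(V^\top\Sigma V)$ ($=\mathbb{E}\|\mathbf{x}-\mathbf{x}VV^\top\|_2^2$), $\mathcal{L}_{\mathrm{reg}}(V;\Sigma)=\mathcal{L}_{\mathrm{RCS}}(V;\Sigma)-\min_{W\in\mathcal{O}_{p\times k}}\mathcal{L}_{\mathrm{RCS}}(W;\Sigma)$; for a distribution $P$ with covariance $\Sigma=\mathbb{E}_P[\mathbf{x}^\top\mathbf{x}]$, $\mathcal{L}(V;P):=\mathcal{L}(V;\Sigma)$. poolPCA: $V^{\mathrm{pool}}\in\arg\max_{V\in\mathcal{O}_{p\times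 k}}\operatorname{Tr}(V^\top\Sigma_{\mathrm{pool}}V)$ with $\Sigma_{\mathrm{pool}}=\sum_e w_e\Sigma_e$. sepPCA: for each $e$ let $V^{*,e}\in\arg\max_V\operatorname{Tr}(V^\top\Sigma_eV)$, let $e_0$ be the smallest index minimizing $\operatorname{Tr}((V^{*,e})^\top\Sigma_eV^{*,e})$, and $V^{\mathrm{sep}}:=V^{*,e_0}$. *)

theory Defs
  imports "HOL-Probability.Probability"
begin

text \<open>Row vectors x in R^{1 x p} are modelled as real^'p; p x k matrices as real^'k^'p
  (rows indexed by 'p, columns by 'k).\<close>

definition stiefel :: "(real^'k^'p) set" where
  "stiefel = {V. transpose V ** V = mat 1}"

definition L_var :: "real^'k^'p \<Rightarrow> real^'p^'p \<Rightarrow> real" where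
  "L_var V S = trace (transpose V ** S ** V)"

definition L_RCS :: "real^'k^'p \<Rightarrow> real^'p^'p \<Rightarrow> real" where
  "L_RCS V S = trace S - trace (transpose V ** S ** V)"

definition L_reg :: "real^'k^'p \<Rightarrow> real^'p^'p \<Rightarrow> real" where
  "L_reg V S = L_RCS V S - (INF W\<in>(stiefel :: (real^'k^'p) set). L_RCS W S)"

datatype loss_kind = RCS | NegVar | Reg

fun loss :: "loss_kind \<Rightarrow> real^'k^'p \<Rightarrow> real^'p^'p \<Rightarrow> real" where
  "loss RCS V S = L_RCS V S"
| "loss NegVar V S = - L_var V S"
| "loss Reg V S = L_reg V S"

definition centered_dist :: "(real^'p) measure \<Rightarrow> bool" where
  "centered_dist M \<longleftrightarrow> prob_space M \<and> sets M = sets borel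
     \<and> (\<forall>i. integrable M (\<lambda>x. (x$i)^2))
     \<and> (\<forall>i. (\<integral>x. x$i \<partial>M) = 0)"

definition covmat :: "(real^'p) measure \<Rightarrow> real^'p^'p" where
  "covmat M = (\<chi> i j. \<integral>x. x$i * x$j \<partial>M)"

definition lossP :: "loss_kind \<Rightarrow> real^'k^'p \<Rightarrow> (real^'p) measure \<Rightarrow> real" where
  "lossP L V M = loss L V (covmat M)"

definition Pset :: "(nat \<Rightarrow> (real^'p) measure) \<Rightarrow> nat \<Rightarrow> (real^'p) measure set" where
  "Pset Ps E = {M. centered_dist M \<and> covmat M \<in> convex hull ((\<lambda>e. covmat (Ps e)) ` {1..E})}"

definition worst_src :: "loss_kind \<Rightarrow> real^'k^'p \<Rightarrow> (nat \<Rightarrow> (real^'p) measure) \<Rightarrow> nat \<Rightarrow> real" where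
  "worst_src L V Ps E = Max ((\<lambda>e. lossP L V (Ps e)) ` {1..E})"

definition sup_risk :: "loss_kind \<Rightarrow> real^'k^'p \<Rightarrow> (nat \<Rightarrow> (real^'p) measure) \<Rightarrow> nat \<Rightarrow> real" where
  "sup_risk L V Ps E = Sup ((\<lambda>M. lossP L V M) ` Pset Ps E)"

definition valid_sources :: "(nat \<Rightarrow> (real^'p) measure) \<Rightarrow> (nat \<Rightarrow> real) \<Rightarrow> nat \<Rightarrow> bool" where
  "valid_sources Ps w E \<longleftrightarrow> E \<ge> 1
     \<and> (\<forall>e\<in>{1..E}. centered_dist (Ps e) \<and> trace (covmat (Ps e)) > 0 \<and> w e > 0)
     \<and> (\<Sum>e=1..E. w e) = 1"

definition pca_sol :: "real^'p^'p \<Rightarrow> real^'k^'p \<Rightarrow> bool" where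
  "pca_sol S V \<longleftrightarrow> V \<in> stiefel \<and> (\<forall>W\<in>(stiefel :: (real^'k^'p) set). L_var W S \<le> L_var V S)"

definition pool_cov :: "(nat \<Rightarrow> (real^'p) measure) \<Rightarrow> (nat \<Rightarrow> real) \<Rightarrow> nat \<Rightarrow> real^'p^'p" where
  "pool_cov Ps w E = (\<Sum>e=1..E. w e *\<^sub>R covmat (Ps e))"

definition sep_index :: "(nat \<Rightarrow> (real^'p) measure) \<Rightarrow> nat \<Rightarrow> (nat \<Rightarrow> real^'k^'p) \<Rightarrow> nat" where
  "sep_index Ps E Vs = (LEAST e. e \<in> {1..E} \<and>
      (\<forall>e'\<in>{1..E}. L_var (Vs e) (covmat (Ps e)) \<le> L_var (Vs e') (covmat (Ps e'))))"

definition is_argmin_sup :: "loss_kind \<Rightarrow> real^'k^'p \<Rightarrow> (nat \<Rightarrow> (real^'p) measure) \<Rightarrow> nat \<Rightarrow> bool" where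
  "is_argmin_sup L V Ps E \<longleftrightarrow> V \<in> stiefel \<and> (\<forall>W\<in>(stiefel :: (real^'k^'p) set). sup_risk L V Ps E \<le> sup_risk L W Ps E)"

end

theory Submission
  imports Defs
begin

definition sym2 :: "real^2 \<Rightarrow> (real^2) measure" where
  "sym2 v = distr (measure_pmf (pmf_of_set {v, -v})) borel (\<lambda>x. x)"

lemma sym2_props:
  fixes f :: "real^2 \<Rightarrow> real"
  assumes "v \<noteq> 0" and fm: "f \<in> borel_measurable borel"
  shows "integral\<^sup>L (sym2 v) f = (f v + f (-v)) / 2"
    and "integrable (sym2 v) f"
proof -
  have vv: "v \<noteq> -v"
  proof
    assume "v = -v"
    then have "v + v = 0" by (metis add.right_inverse)
    then have "2 *\<^sub>R v = 0" by (simp add: scaleR_2)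
    then show False using assms by simp
  qed
  have ne: "{v, -v} \<noteq> {}" "finite {v, -v}" by auto
  have m: "(\<lambda>x. x) \<in> measurable (measure_pmf (pmf_of_set {v, -v})) borel" by simp
  show "integral\<^sup>L (sym2 v) f = (f v + f (-v)) / 2"
    unfolding sym2_def
    by (simp add: integral_distr[OF m fm] integral_pmf_of_set[OF ne] vv)
  show "integrable (sym2 v) f"
    unfolding sym2_def integrable_distr_eq[OF m fm]
    by (rule integrable_measure_pmf_finite) (simp add: ne)
qed

lemma sym2_centered:
  assumes "v \<noteq> 0"
  shows "centered_dist (sym2 v)" and "covmat (sym2 v) = (\<chi> i j. v$i * v$j)"
proof -
  have ne: "{v, -v} \<noteq> {}" "finite {v, -v}" by auto
  have "prob_space (sym2 v)" unfolding sym2_def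
    by (rule prob_space.prob_space_distr) (auto simp: prob_space_measure_pmf)
  then show "centered_dist (sym2 v)"
  proof -
    have "\<And>i. integrable (sym2 v) (\<lambda>x. (x$i)^2)" by (rule sym2_props(2)[OF assms]) measurable
    moreover have "\<And>i. (\<integral>x. x$i \<partial>sym2 v) = 0" by (subst sym2_props(1)[OF assms]) auto
    moreover have "sets (sym2 v) = sets borel" by (simp add: sym2_def)
    ultimately show ?thesis unfolding centered_dist_def using \<open>prob_space (sym2 v)\<close> by blast
  qed
  have "\<And>i j. (\<integral>x. x$i * x$j \<partial>sym2 v) = v$i * v$j" by (subst sym2_props(1)[OF assms]) auto
  then show "covmat (sym2 v) = (\<chi> i j. v$i * v$j)"
    unfolding covmat_def by simp
qed
lemma Lvar_expand:
  "L_var (W::real^'k^'p) S = (\<Sum>j\<in>UNIV. \<Sum>b\<in>UNIV. \<Sum>a\<in>UNIV. W$a$j * S$a$b * W$b$j)"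
  unfolding L_var_def trace_def matrix_matrix_mult_def transpose_def
  by (simp add: sum_distrib_right)

lemma Lvar_linear: "linear (\<lambda>S. L_var (W::real^'k^'p) S)"
  by (rule linearI) (simp_all add: Lvar_expand sum.distrib sum_distrib_left algebra_simps)

lemma trace_linear: "linear (\<lambda>S::real^'p^'p. trace S)"
  by (rule linearI) (simp_all add: trace_def sum.distrib sum_distrib_left algebra_simps)

lemma Lvar_sum:
  "L_var (W::real^'k^'p) (\<Sum>x\<in>T. u x *\<^sub>R x) = (\<Sum>x\<in>T. u x * L_var W x)"
  using linear_sum[OF Lvar_linear, of W "\<lambda>x. u x *\<^sub>R x" T] linear_scale[OF Lvar_linear, of W]
  by simp

lemma trace_scaleR: "trace (r *\<^sub>R (A::real^'p^'p)) = r * trace A"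
  by (simp add: trace_def sum_distrib_left)

lemma trace_sum:
  "trace (\<Sum>x\<in>T. u x *\<^sub>R (x::real^'p^'p)) = (\<Sum>x\<in>T. u x * trace x)"
  using linear_sum[OF trace_linear, of "\<lambda>x. u x *\<^sub>R x" T]
  by (simp add: trace_scaleR)

lemma RCS_sum:
  "L_RCS (W::real^'k^'p) (\<Sum>x\<in>T. u x *\<^sub>R x) = (\<Sum>x\<in>T. u x * L_RCS W x)"
  using Lvar_sum[of W u T] trace_sum[of u T]
  unfolding L_RCS_def L_var_def by (simp add: sum_subtractf right_diff_distrib)

lemma stiefel_entry:
  assumes "(W::real^'k^'p) \<in> stiefel"
  shows "\<bar>W$a$j\<bar> \<le> 1"
proof -
  have "(transpose W ** W)$j$j = 1" using assms by (simp add: stiefel_def mat_def)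
  then have s: "(\<Sum>i\<in>UNIV. W$i$j * W$i$j) = 1"
    by (simp add: matrix_matrix_mult_def transpose_def)
  have "W$a$j * W$a$j \<le> (\<Sum>i\<in>UNIV. W$i$j * W$i$j)"
    by (rule member_le_sum) auto
  then have "\<bar>W$a$j\<bar>^2 \<le> 1^2" using s by (simp add: power2_eq_square)
  then show ?thesis using power2_le_imp_le[of "\<bar>W$a$j\<bar>" 1] by simp
qed

lemma Lvar_bound:
  assumes "(W::real^'k^'p) \<in> stiefel"
  shows "\<bar>L_var W S\<bar> \<le> (\<Sum>j\<in>(UNIV::'k set). \<Sum>b\<in>UNIV. \<Sum>a\<in>UNIV. \<bar>S$a$b\<bar>)"
proof -
  have t: "\<bar>W$a$j * S$a$b * W$b$j\<bar> \<le> \<bar>S$a$b\<bar>" for a b j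
  proof -
    have "\<bar>W$a$j * S$a$b * W$b$j\<bar> = \<bar>S$a$b\<bar> * (\<bar>W$a$j\<bar> * \<bar>W$b$j\<bar>)"
      by (simp add: abs_mult)
    also have "\<dots> \<le> \<bar>S$a$b\<bar> * 1"
      by (rule mult_left_mono) (auto intro: mult_le_one stiefel_entry[OF assms])
    finally show ?thesis by simp
  qed
  let ?x = "\<lambda>j b a. W$a$j * S$a$b * W$b$j"
  have "\<bar>L_var W S\<bar> \<le> (\<Sum>j\<in>UNIV. \<bar>\<Sum>a\<in>UNIV. \<Sum>b\<in>UNIV. ?x j a b\<bar>)"
    unfolding Lvar_expand by (rule sum_abs)
  also have "\<dots> \<le> (\<Sum>j\<in>UNIV. \<Sum>a\<in>UNIV. \<bar>\<Sum>b\<in>UNIV. ?x j a b\<bar>)"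
    by (intro sum_mono sum_abs)
  also have "\<dots> \<le> (\<Sum>j\<in>UNIV. \<Sum>a\<in>UNIV. \<Sum>b\<in>UNIV. \<bar>?x j a b\<bar>)"
    by (intro sum_mono sum_abs)
  also have "\<dots> \<le> (\<Sum>j\<in>(UNIV::'k set). \<Sum>b\<in>UNIV. \<Sum>a\<in>UNIV. \<bar>S$a$b\<bar>)"
    by (intro sum_mono t)
  finally show ?thesis .
qed

lemma RCS_bdd: "bdd_below ((\<lambda>W. L_RCS W S) ` (stiefel::(real^'k^'p) set))"
proof -
  let ?C = "(\<Sum>j\<in>(UNIV::'k set). \<Sum>b\<in>UNIV. \<Sum>a\<in>UNIV. \<bar>S$a$b\<bar>)"
  have h: "trace S - ?C \<le> L_RCS W S" if "W \<in> stiefel" for W :: "real^'k^'p"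
    using Lvar_bound[OF that, of S] unfolding L_RCS_def L_var_def by linarith
  show ?thesis by (rule bdd_belowI2[where m = "trace S - ?C"]) (rule h)
qed

lemma loss_convex:
  assumes T: "finite T" and u: "\<forall>x\<in>T. 0 \<le> u x"
    and ne: "(stiefel::(real^'k^'p) set) \<noteq> {}"
  shows "loss L (V::real^'k^'p) (\<Sum>x\<in>T. u x *\<^sub>R x) \<le> (\<Sum>x\<in>T. u x * loss L V x)"
proof (cases L)
  case RCS
  then show ?thesis by (simp add: RCS_sum)
next
  case NegVar
  then show ?thesis by (simp add: Lvar_sum sum_negf)
next
  case Reg
  let ?I = "\<lambda>S. (INF W\<in>(stiefel :: (real^'k^'p) set). L_RCS W S)"
  have "(\<Sum>x\<in>T. u x * ?I x) \<le> ?I (\<Sum>x\<in>T. u x *\<^sub>R x)"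
  proof (rule cINF_greatest[OF ne])
    fix W :: "real^'k^'p" assume W: "W \<in> stiefel"
    have "(\<Sum>x\<in>T. u x * ?I x) \<le> (\<Sum>x\<in>T. u x * L_RCS W x)"
      by (rule sum_mono, rule mult_left_mono) (auto intro: cINF_lower[OF RCS_bdd W] simp: u)
    then show "(\<Sum>x\<in>T. u x * ?I x) \<le> L_RCS W (\<Sum>x\<in>T. u x *\<^sub>R x)" by (simp add: RCS_sum)
  qed
  then show ?thesis using Reg
    by (simp add: L_reg_def RCS_sum right_diff_distrib sum_subtractf)
qed

lemma worst_src_img:
  "worst_src L V Ps E = Max ((\<lambda>X. loss L V X) ` ((\<lambda>e. covmat (Ps e)) ` {1..E}))"
  unfolding worst_src_def lossP_def image_image ..

lemma sup_eq_worst: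
  assumes src: "valid_sources Ps w E" and V: "(V::real^'k^'p) \<in> stiefel"
  shows "sup_risk L V Ps E = worst_src L V Ps E"
proof -
  let ?T = "(\<lambda>e. covmat (Ps e)) ` {1..E}"
  have E1: "E \<ge> 1" using src by (simp add: valid_sources_def)
  have cd: "centered_dist (Ps e)" if "e \<in> {1..E}" for e
    using src that unfolding valid_sources_def by simp
  have fT: "finite ?T" by simp
  have neT: "?T \<noteq> {}" using E1 by auto
  have ne: "(stiefel::(real^'k^'p) set) \<noteq> {}" using V by auto
  let ?z = "worst_src L V Ps E"
  have z: "?z = Max ((\<lambda>X. loss L V X) ` ?T)" by (rule worst_src_img)
  have inP: "Ps e \<in> Pset Ps E" if "e \<in> {1..E}" for e
  proof -
    have "covmat (Ps e) \<in> ?T" using that by (rule imageI)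
    then have "covmat (Ps e) \<in> convex hull ?T" by (rule hull_inc)
    then show ?thesis by (simp add: Pset_def cd[OF that])
  qed
  have upper: "loss L V X \<le> ?z" if "X \<in> convex hull ?T" for X
  proof -
    have "\<exists>u. (\<forall>x\<in>?T. 0 \<le> u x) \<and> sum u ?T = 1 \<and> (\<Sum>x\<in>?T. u x *\<^sub>R x) = X"
      using that unfolding convex_hull_finite[OF fT] mem_Collect_eq .
    then obtain u where u: "\<forall>x\<in>?T. 0 \<le> u x" "sum u ?T = 1" "(\<Sum>x\<in>?T. u x *\<^sub>R x) = X"
      by (elim exE conjE)
    have mx: "loss L V x \<le> ?z" if "x \<in> ?T" for x
      unfolding z by (rule Max_ge) (simp, use that in blast)
    have "loss L V X \<le> (\<Sum>x\<in>?T. u x * loss L V x)"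
      using loss_convex[OF fT u(1) ne, of L V] u(3) by simp
    also have "\<dots> \<le> (\<Sum>x\<in>?T. u x * ?z)"
      by (rule sum_mono, rule mult_left_mono) (simp add: mx, simp add: u(1))
    also have "\<dots> = ?z" using u(2) by (simp add: sum_distrib_right[symmetric])
    finally show ?thesis .
  qed
  have "?z \<in> (\<lambda>X. loss L V X) ` ?T" unfolding z by (rule Max_in) (simp, use neT in simp)
  then obtain e where e: "?z = loss L V (covmat (Ps e))" "e \<in> {1..E}"
    unfolding image_image by (rule imageE)
  show ?thesis unfolding sup_risk_def
  proof (rule cSup_eq_maximum)
    show "?z \<in> (\<lambda>M. lossP L V M) ` Pset Ps E"
    proof (rule image_eqI)
      show "?z = lossP L V (Ps e)" using e(1) by (simp add: lossP_def)
      show "Ps e \<in> Pset Ps E" by (rule inP[OF e(2)])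
    qed
    fix x assume "x \<in> (\<lambda>M. lossP L V M) ` Pset Ps E"
    then obtain M where M: "x = lossP L V M" "M \<in> Pset Ps E" by (rule imageE)
    from M(2) have "covmat M \<in> convex hull ?T" by (simp add: Pset_def)
    then have "loss L V (covmat M) \<le> ?z" by (rule upper)
    then show "x \<le> ?z" using M(1) by (simp add: lossP_def)
  qed
qed

lemma Lvar12:
  "L_var (V::real^1^2) S = V$1$1*V$1$1*S$1$1 + V$1$1*V$2$1*(S$1$2+S$2$1) + V$2$1*V$2$1*S$2$2"
  unfolding Lvar_expand sum_1 sum_2 by (simp add: algebra_simps)

lemma trace2: "trace (S::real^2^2) = S$1$1 + S$2$2"
  unfolding trace_def sum_2 ..

lemma stiefel12: "(V::real^1^2) \<in> stiefel \<longleftrightarrow> (V$1$1)^2 + (V$2$1)^2 = 1"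
proof -
  have "(transpose V ** V)$1$1 = (V$1$1)^2 + (V$2$1)^2"
    by (simp add: matrix_matrix_mult_def transpose_def sum_2 power2_eq_square)
  moreover have "(transpose V ** V = mat 1) \<longleftrightarrow> (transpose V ** V)$1$1 = 1"
    by (simp add: vec_eq_iff forall_1 mat_def)
  ultimately show ?thesis unfolding stiefel_def by simp
qed

definition e1m :: "real^1^2" where "e1m = (\<chi> i j. if i = 1 then 1 else 0)"
definition e2m :: "real^1^2" where "e2m = (\<chi> i j. if i = 2 then 1 else 0)"

lemma e1m_st: "e1m \<in> stiefel" and e2m_st: "e2m \<in> stiefel"
  by (simp_all add: stiefel12 e1m_def e2m_def)

definition a2 :: "real^2" where "a2 = vector [2, 0]"
definition b2 :: "real^2" where "b2 = vector [0, 1]"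
definition C1 :: "real^2^2" where "C1 = (\<chi> i j. a2$i * a2$j)"
definition C2 :: "real^2^2" where "C2 = (\<chi> i j. b2$i * b2$j)"

lemma C1_ent: "C1$1$1 = 4" "C1$1$2 = 0" "C1$2$1 = 0" "C1$2$2 = 0"
  by (simp_all add: C1_def a2_def)
lemma C2_ent: "C2$1$1 = 0" "C2$1$2 = 0" "C2$2$1 = 0" "C2$2$2 = 1"
  by (simp_all add: C2_def b2_def)

lemma a2_nz: "a2 \<noteq> 0" and b2_nz: "b2 \<noteq> 0"
  by (auto simp: a2_def b2_def vec_eq_iff forall_2)

definition PsX :: "nat \<Rightarrow> (real^2) measure" where
  "PsX e = (if e = 1 then sym2 a2 else sym2 b2)"

lemma covX: "covmat (PsX 1) = C1" "covmat (PsX 2) = C2"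
  by (simp_all add: PsX_def sym2_centered[OF a2_nz] sym2_centered[OF b2_nz] C1_def C2_def)

lemma covX1: "covmat (PsX (Suc 0)) = C1"
  unfolding One_nat_def[symmetric] by (rule covX(1))

lemma two_set: "{1..2::nat} = {1,2}" by auto

lemma validX: "valid_sources PsX (\<lambda>_. 1/2) 2"
proof -
  have "e \<in> {1..2} \<Longrightarrow> centered_dist (PsX e) \<and> trace (covmat (PsX e)) > 0" for e
    using covX sym2_centered(1)[OF a2_nz] sym2_centered(1)[OF b2_nz]
    by (auto simp: two_set PsX_def trace2 C1_ent C2_ent)
  then show ?thesis unfolding valid_sources_def by (simp add: two_set)
qed

lemma LvarC1: "L_var (V::real^1^2) C1 = 4 * (V$1$1)^2"
  by (simp add: Lvar12 C1_ent power2_eq_square)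
lemma LvarC2: "L_var (V::real^1^2) C2 = (V$2$1)^2"
  by (simp add: Lvar12 C2_ent power2_eq_square)

lemma infC1: "(INF W\<in>(stiefel::(real^1^2) set). L_RCS W C1) = 0"
proof -
  have "L_RCS W C1 = 4 - 4 * (W$1$1)^2" for W :: "real^1^2"
    by (simp add: L_RCS_def LvarC1[unfolded L_var_def] trace2 C1_ent)
  moreover have "(W$1$1)^2 \<le> 1" if "W \<in> stiefel" for W :: "real^1^2"
    using that unfolding stiefel12 by (smt (verit) zero_le_power2)
  moreover have "(e1m$1$1)^2 = 1" by (simp add: e1m_def)
  ultimately show ?thesis
    by (intro cInf_eq_minimum) (auto intro: e1m_st intro!: image_eqI[where x=e1m])
qed

lemma infC2: "(INF W\<in>(stiefel::(real^1^2) set). L_RCS W C2) = 0"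
proof -
  have "L_RCS W C2 = 1 - (W$2$1)^2" for W :: "real^1^2"
    by (simp add: L_RCS_def LvarC2[unfolded L_var_def] trace2 C2_ent)
  moreover have "(W$2$1)^2 \<le> 1" if "W \<in> stiefel" for W :: "real^1^2"
    using that unfolding stiefel12 by (smt (verit) zero_le_power2)
  moreover have "(e2m$2$1)^2 = 1" by (simp add: e2m_def)
  ultimately show ?thesis
    by (intro cInf_eq_minimum) (auto intro: e2m_st intro!: image_eqI[where x=e2m])
qed

lemma lossC1: "loss L (V::real^1^2) C1 = (if L = NegVar then - 4 * (V$1$1)^2 else 4 - 4 * (V$1$1)^2)"
proof -
  have r: "L_RCS V C1 = 4 - 4 * (V$1$1)^2"
    by (simp add: L_RCS_def trace2 C1_ent LvarC1[unfolded L_var_def])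
  show ?thesis by (cases L) (simp_all add: L_reg_def infC1 r LvarC1)
qed
lemma lossC2: "loss L (V::real^1^2) C2 = (if L = NegVar then - ((V$2$1)^2) else 1 - (V$2$1)^2)"
proof -
  have r: "L_RCS V C2 = 1 - (V$2$1)^2"
    by (simp add: L_RCS_def trace2 C2_ent LvarC2[unfolded L_var_def])
  show ?thesis by (cases L) (simp_all add: L_reg_def infC2 r LvarC2)
qed

lemma worstX: "worst_src L (V::real^1^2) PsX 2 = max (loss L V C1) (loss L V C2)"
proof -
  show ?thesis unfolding worst_src_def lossP_def two_set by (simp add: covX covX1)
qed

definition W0 :: "real^1^2" where "W0 = (\<chi> i j. if i = 1 then 12/13 else 5/13)"

lemma W0_st: "W0 \<in> stiefel"
  by (simp add: stiefel12 W0_def power2_eq_square)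

lemma notargmin:
  assumes V: "(V::real^1^2) \<in> stiefel"
    and cs: "((V$1$1)^2 = 1 \<and> (V$2$1)^2 = 0) \<or> ((V$1$1)^2 = 0 \<and> (V$2$1)^2 = 1)"
  shows "\<not> is_argmin_sup L V PsX 2"
proof
  assume "is_argmin_sup L V PsX 2"
  then have "sup_risk L V PsX 2 \<le> sup_risk L W0 PsX 2"
    unfolding is_argmin_sup_def using W0_st by blast
  then have le: "worst_src L V PsX 2 \<le> worst_src L W0 PsX 2"
    using sup_eq_worst[OF validX V] sup_eq_worst[OF validX W0_st] by simp
  have w0: "(W0$1$1)^2 = 144/169" "(W0$2$1)^2 = 25/169"
    by (simp_all add: W0_def power2_eq_square)
  show False
    using le cs unfolding worstX lossC1 lossC2 w0
    by (cases L) auto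
qed

lemma LvarPool:
  "L_var (V::real^1^2) (pool_cov PsX (\<lambda>_. 1/2) 2) = 2 * (V$1$1)^2 + (V$2$1)^2 / 2"
proof -
  have "pool_cov PsX (\<lambda>_. 1/2) 2 = (1/2) *\<^sub>R C1 + (1/2) *\<^sub>R C2"
    unfolding pool_cov_def two_set by (simp add: covX covX1)
  then show ?thesis
    by (simp add: linear_add[OF Lvar_linear] linear_scale[OF Lvar_linear] LvarC1 LvarC2)
qed

lemma e1m_ent: "e1m$1$1 = 1" "e1m$2$1 = 0"
  by (simp_all add: e1m_def)

lemma e1m_eq: assumes "V$1$1 = 1" "V$2$1 = 0" shows "V = e1m"
  unfolding vec_eq_iff forall_2 forall_1 using assms by (simp add: e1m_ent)

lemma me1m_eq: assumes "V$1$1 = -1" "V$2$1 = 0" shows "V = - e1m"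
  unfolding vec_eq_iff forall_2 forall_1 using assms by (simp add: e1m_ent)

lemma pool_bnd: "(W::real^1^2) \<in> stiefel \<Longrightarrow> 2 * (W$1$1)^2 + (W$2$1)^2 / 2 \<le> 2"
  unfolding stiefel12 using zero_le_power2[of "W$2$1"] by linarith

lemma pool_char:
  "{V. pca_sol (pool_cov PsX (\<lambda>_. 1/2) 2) V} = {e1m, - e1m}"
proof
  show "{V. pca_sol (pool_cov PsX (\<lambda>_. 1 / 2) 2) V} \<subseteq> {e1m, - e1m}"
  proof
    fix V :: "real^1^2"
    assume "V \<in> {V. pca_sol (pool_cov PsX (\<lambda>_. 1 / 2) 2) V}"
    then have pc: "pca_sol (pool_cov PsX (\<lambda>_. 1 / 2) 2) V" by simp
    have V: "V \<in> stiefel" using pc unfolding pca_sol_def by blast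
    have m: "L_var e1m (pool_cov PsX (\<lambda>_. 1/2) 2) \<le> L_var V (pool_cov PsX (\<lambda>_. 1/2) 2)"
      using pc e1m_st unfolding pca_sol_def by blast
    have c: "(V$1$1)^2 + (V$2$1)^2 = 1" using V stiefel12 by blast
    have "2 \<le> 2 * (V$1$1)^2 + (V$2$1)^2 / 2" using m unfolding LvarPool e1m_ent by simp
    then have s: "(V$2$1)^2 = 0" using c zero_le_power2[of "V$2$1"] by linarith
    then have s0: "V$2$1 = 0" by simp
    have "(V$1$1)^2 = 1" using c s by simp
    then have "V$1$1 = 1 \<or> V$1$1 = -1" by (simp add: power2_eq_1_iff)
    then show "V \<in> {e1m, - e1m}"
    proof
      assume "V$1$1 = 1" then have "V = e1m" using s0 by (rule e1m_eq)
      then show ?thesis by simp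
    next
      assume "V$1$1 = -1" then have "V = - e1m" using s0 by (rule me1m_eq)
      then show ?thesis by simp
    qed
  qed
next
  have me1m_st: "- e1m \<in> stiefel" by (simp add: stiefel12 e1m_ent)
  have "pca_sol (pool_cov PsX (\<lambda>_. 1 / 2) 2) V" if "V = e1m \<or> V = - e1m" for V
  proof -
    have v: "(V$1$1)^2 = 1" "(V$2$1)^2 = 0" "V \<in> stiefel"
      using that e1m_st me1m_st by (elim disjE; simp add: e1m_ent)+
    show ?thesis
    proof (unfold pca_sol_def, intro conjI ballI)
      show "V \<in> stiefel" by (rule v(3))
      fix W :: "real^1^2" assume "W \<in> stiefel"
      then show "L_var W (pool_cov PsX (\<lambda>_. 1 / 2) 2) \<le> L_var V (pool_cov PsX (\<lambda>_. 1 / 2) 2)"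
        unfolding LvarPool v using pool_bnd by simp
    qed
  qed
  then show "{e1m, - e1m} \<subseteq> {V. pca_sol (pool_cov PsX (\<lambda>_. 1 / 2) 2) V}" by blast
qed

lemma sep_part:
  assumes "\<forall>e\<in>{1..2::nat}. pca_sol (covmat (PsX e)) (Vs e :: real^1^2)"
  shows "\<not> is_argmin_sup L (Vs (sep_index PsX 2 Vs)) PsX 2"
proof -
  have "pca_sol (covmat (PsX 1)) (Vs 1)" using assms by (rule bspec) simp
  then have p1: "pca_sol C1 (Vs 1)" by (simp only: covX)
  have "pca_sol (covmat (PsX 2)) (Vs 2)" using assms by (rule bspec) simp
  then have p2: "pca_sol C2 (Vs 2)" by (simp only: covX)
  have st2: "Vs 2 \<in> stiefel" using p2 unfolding pca_sol_def by blast
  have "L_var e1m C1 \<le> L_var (Vs 1) C1" using p1 e1m_st unfolding pca_sol_def by blast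
  then have v1: "L_var (Vs 1) C1 \<ge> 4" by (simp add: LvarC1 e1m_def)
  have "L_var e2m C2 \<le> L_var (Vs 2) C2" using p2 e2m_st unfolding pca_sol_def by blast
  then have v2: "(Vs 2$2$1)^2 \<ge> 1" by (simp add: LvarC2 e2m_def)
  have c2: "(Vs 2$1$1)^2 + (Vs 2$2$1)^2 = 1" using st2 stiefel12 by blast
  then have v2': "(Vs 2$2$1)^2 = 1" "(Vs 2$1$1)^2 = 0"
    using v2 zero_le_power2[of "Vs 2$1$1"] by linarith+
  have L2: "L_var (Vs 2) C2 = 1" using v2' by (simp add: LvarC2)
  have val1: "L_var (Vs 1) (covmat (PsX 1)) \<ge> 4" using v1 by (simp only: covX)
  have val2: "L_var (Vs 2) (covmat (PsX 2)) = 1" using L2 by (simp only: covX)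
  have all2: "\<forall>e'\<in>{1..2::nat}. L_var (Vs 2) (covmat (PsX 2)) \<le> L_var (Vs e') (covmat (PsX e'))"
  proof
    fix e' :: nat assume "e' \<in> {1..2}"
    then have "e' = 1 \<or> e' = 2" unfolding two_set by blast
    then show "L_var (Vs 2) (covmat (PsX 2)) \<le> L_var (Vs e') (covmat (PsX e'))"
    proof
      assume "e' = 1" then show ?thesis using val1 val2 by simp
    next
      assume "e' = 2" then show ?thesis by simp
    qed
  qed
  have idx: "sep_index PsX 2 Vs = 2"
    unfolding sep_index_def
  proof (rule Least_equality)
    show "2 \<in> {1..2::nat} \<and> (\<forall>e'\<in>{1..2}. L_var (Vs 2) (covmat (PsX 2)) \<le> L_var (Vs e') (covmat (PsX e')))"
      using all2 by simp
    fix y :: nat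
    assume h: "y \<in> {1..2::nat} \<and> (\<forall>e'\<in>{1..2}. L_var (Vs y) (covmat (PsX y)) \<le> L_var (Vs e') (covmat (PsX e')))"
    show "2 \<le> y"
    proof (rule ccontr)
      assume "\<not> 2 \<le> y"
      then have y1: "y = 1" using h by simp
      have "L_var (Vs y) (covmat (PsX y)) \<le> L_var (Vs 2) (covmat (PsX 2))"
        using h by simp
      then have "L_var (Vs 1) (covmat (PsX 1)) \<le> 1" unfolding y1 val2 .
      then show False using val1 by simp
    qed
  qed
  show ?thesis unfolding idx by (rule notargmin[OF st2]) (use v2' in simp)
qed

theorem mainTheorem2:
  fixes L :: loss_kind
    and E :: nat and w :: "nat \<Rightarrow> real"
    and Ps :: "nat \<Rightarrow> (real^'p) measure"
    and Vstar :: "real^'k^'p"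
  assumes kp: "CARD('k) \<le> CARD('p)"
    and src: "valid_sources Ps w E"
    and Vstar_O: "Vstar \<in> stiefel"
    and Vstar_opt: "\<forall>V\<in>(stiefel :: (real^'k^'p) set). worst_src L Vstar Ps E \<le> worst_src L V Ps E"
  shows
    "(\<forall>V\<in>(stiefel :: (real^'k^'p) set). sup_risk L V Ps E = worst_src L V Ps E)
   \<and> (\<forall>V\<in>(stiefel :: (real^'k^'p) set). \<forall>W\<in>(stiefel :: (real^'k^'p) set).
        worst_src L V Ps E < worst_src L W Ps E \<longrightarrow> sup_risk L V Ps E < sup_risk L W Ps E)
   \<and> is_argmin_sup L Vstar Ps E
   \<and> (\<exists>(E'::nat) (w'::nat \<Rightarrow> real) (Ps'::nat \<Rightarrow> (real^2) measure).
        valid_sources Ps' w' E'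
      \<and> (\<exists>V0::real^1^2. {V. pca_sol (pool_cov Ps' w' E') V} = {V0, - V0})
      \<and> (\<forall>Vp::real^1^2. pca_sol (pool_cov Ps' w' E') Vp \<longrightarrow> \<not> is_argmin_sup L Vp Ps' E')
      \<and> (\<forall>Vs::nat \<Rightarrow> real^1^2. (\<forall>e\<in>{1..E'}. pca_sol (covmat (Ps' e)) (Vs e)) \<longrightarrow>
           \<not> is_argmin_sup L (Vs (sep_index Ps' E' Vs)) Ps' E'))"
proof -
  have gen: "\<forall>V\<in>(stiefel :: (real^'k^'p) set). sup_risk L V Ps E = worst_src L V Ps E"
    using sup_eq_worst[OF src] by blast
  have p2: "\<forall>V\<in>(stiefel :: (real^'k^'p) set). \<forall>W\<in>(stiefel :: (real^'k^'p) set).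
        worst_src L V Ps E < worst_src L W Ps E \<longrightarrow> sup_risk L V Ps E < sup_risk L W Ps E"
    using gen by simp
  have p3: "is_argmin_sup L Vstar Ps E"
    unfolding is_argmin_sup_def using gen Vstar_O Vstar_opt by simp
  have p4: "\<exists>(E'::nat) (w'::nat \<Rightarrow> real) (Ps'::nat \<Rightarrow> (real^2) measure).
        valid_sources Ps' w' E'
      \<and> (\<exists>V0::real^1^2. {V. pca_sol (pool_cov Ps' w' E') V} = {V0, - V0})
      \<and> (\<forall>Vp::real^1^2. pca_sol (pool_cov Ps' w' E') Vp \<longrightarrow> \<not> is_argmin_sup L Vp Ps' E')
      \<and> (\<forall>Vs::nat \<Rightarrow> real^1^2. (\<forall>e\<in>{1..E'}. pca_sol (covmat (Ps' e)) (Vs e)) \<longrightarrow>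
           \<not> is_argmin_sup L (Vs (sep_index Ps' E' Vs)) Ps' E')"
  proof (rule exI[where x=2], rule exI[where x="\<lambda>_. 1/2"], rule exI[where x=PsX], intro conjI allI impI)
    show "valid_sources PsX (\<lambda>_. 1/2) 2" by (rule validX)
    show "\<exists>V0::real^1^2. {V. pca_sol (pool_cov PsX (\<lambda>_. 1/2) 2) V} = {V0, - V0}" using pool_char by blast
    fix Vp :: "real^1^2"
    assume "pca_sol (pool_cov PsX (\<lambda>_. 1/2) 2) Vp"
    then have "Vp = e1m \<or> Vp = - e1m" using pool_char by blast
    moreover have "(e1m$1$1)^2 = 1 \<and> (e1m$2$1)^2 = 0" by (simp add: e1m_def)
    moreover have "((-e1m)$1$1)^2 = 1 \<and> ((-e1m)$2$1)^2 = 0" by (simp add: e1m_def)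
    moreover have "- e1m \<in> stiefel" by (simp add: stiefel12 e1m_def)
    ultimately show "\<not> is_argmin_sup L Vp PsX 2"
      using notargmin e1m_st by blast
  next
    fix Vs :: "nat \<Rightarrow> real^1^2"
    assume "\<forall>e\<in>{1..2}. pca_sol (covmat (PsX e)) (Vs e)"
    then show "\<not> is_argmin_sup L (Vs (sep_index PsX 2 Vs)) PsX 2" by (rule sep_part)
  qed
  show ?thesis by (intro conjI gen p2 p3 p4)
qed

end
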